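(* For each $\sigma\ge 1$, let $K_\sigma$ be any string of the form $K_\sigma=s_{\sigma-1}^{k_{\sigma-1}}\cdots s_1^{k_1}s_0^{k_0}$, where $s_0<s_1<\dots<s_{\sigma-1}$ are all the letters of an ordered alphabet $\Sigma_\sigma$ of size $\sigma$ and all $k_i>1$ are integers. Then $\chi(K_\sigma)/r(K_\sigma)\to 2$ as $\sigma\to\infty$.
   Context: Strings are $0$-indexed. $\$$ is an end-marker not in the alphabet, smaller than every letter, appended once at the end. $r(K)$ is the number of runs (maximal blocks of one repeated letter) in $\operatorname{BWT}(K\$)$, the last column of the matrix of lexicographically sorted cyclic rotations of $K\$$. For a string $v$, a substring $x$ (possibly empty) is right-maximal if $xa$ and $xb$ are substrings of $v$ for two distinct letters $a\neq b$; such words $xa$ are right-extensions of $v$. A set $S$ of positions of $v$ is suffixient if every right-extension of $v$ is a suffix of $v[0..j]$ for some $j\in S$. $\chi(K)$ is the minimum size of a suffixient set for $K\$$. *)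

theory Defs
  imports Complex_Main "HOL-Library.List_Lexorder" "HOL-Library.Sublist"
begin

text \<open>Strings are lists of naturals. Letter 0 plays the role of the end-marker,
  which is smaller than every letter; genuine letters are positive.\<close>

definition bwt :: "nat list \<Rightarrow> nat list" where
  "bwt w = map last (sort (map (\<lambda>i. rotate i w) [0..<length w]))"

definition runs :: "nat list \<Rightarrow> nat" where
  "runs xs = (if xs = [] then 0
     else Suc (card {i. Suc i < length xs \<and> xs ! i \<noteq> xs ! Suc i}))"

definition r_bwt :: "nat list \<Rightarrow> nat" where
  "r_bwt K = runs (bwt (K @ [0]))"

definition right_extension :: "nat list \<Rightarrow> nat list \<Rightarrow> bool" where
  "right_extension v y \<longleftrightarrow>
     (\<exists>x a b. y = x @ [a] \<and> a \<noteq> b \<and> sublist (x @ [a]) v \<and> sublist (x @ [b]) v)"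

definition suffixient :: "nat set \<Rightarrow> nat list \<Rightarrow> bool" where
  "suffixient S v \<longleftrightarrow> S \<subseteq> {..<length v} \<and>
     (\<forall>y. right_extension v y \<longrightarrow> (\<exists>j\<in>S. suffix y (take (Suc j) v)))"

definition chi :: "nat list \<Rightarrow> nat" where
  "chi K = Min (card ` {S. suffixient S (K @ [0])})"

definition Kstr :: "nat \<Rightarrow> (nat \<Rightarrow> nat) \<Rightarrow> nat list" where
  "Kstr \<sigma> k = concat (map (\<lambda>i. replicate (k i) (Suc i)) (rev [0..<\<sigma>]))"

end

theory Submission imports Defs "HOL-Library.Multiset"
begin

lemma Kstr_Suc: "Kstr (Suc s) k = replicate (k s) (Suc s) @ Kstr s k"
  by (simp add: Kstr_def)

lemma Kstr_0: "Kstr 0 k = []"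
  by (simp add: Kstr_def)

lemma set_Kstr: "set (Kstr s k) \<subseteq> {1..s}"
  by (induction s) (auto simp: Kstr_Suc Kstr_0)

lemma sorted_rev_Kstr: "sorted (rev (Kstr s k))"
proof (induction s)
  case 0 then show ?case by (simp add: Kstr_0)
next
  case (Suc s)
  have "\<forall>x\<in>set (Kstr s k). x \<le> Suc s" using set_Kstr[of s k] by auto
  then show ?case using Suc by (auto simp: Kstr_Suc sorted_append)
qed

lemma sorted_rev_w: "sorted (rev (Kstr s k @ [0]))"
  using sorted_rev_Kstr[of s k] by simp

lemma mono_w:
  assumes "i \<le> j" "j < length (Kstr s k @ [0])"
  shows "(Kstr s k @ [0]) ! j \<le> (Kstr s k @ [0]) ! i"
proof -
  let ?w = "Kstr s k @ [0]"
  let ?n = "length ?w"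
  have "rev ?w ! (?n - 1 - j) \<le> rev ?w ! (?n - 1 - i)"
    using sorted_nth_mono[OF sorted_rev_w, of "?n - 1 - j" "?n - 1 - i"] assms by simp
  moreover have "rev ?w ! (?n - 1 - j) = ?w ! (?n - Suc (?n - 1 - j))"
    by (rule rev_nth) (use assms in simp)
  moreover have "rev ?w ! (?n - 1 - i) = ?w ! (?n - Suc (?n - 1 - i))"
    by (rule rev_nth) (use assms in simp)
  moreover have "?n - Suc (?n - 1 - j) = j" "?n - Suc (?n - 1 - i) = i" using assms by auto
  ultimately show ?thesis by simp
qed

lemma pos_w: "j < length (Kstr s k) \<Longrightarrow> (Kstr s k @ [0]) ! j > 0"
proof -
  assume a: "j < length (Kstr s k)"
  have "Kstr s k ! j \<in> set (Kstr s k)" using a by (rule nth_mem)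
  then have "Kstr s k ! j \<ge> 1" using set_Kstr[of s k] by auto
  then show ?thesis using a by (simp add: nth_append)
qed

lemma last_w: "(Kstr s k @ [0]) ! length (Kstr s k) = 0"
  by simp

lemma rd_rep: "m \<ge> 1 \<Longrightarrow> xs \<noteq> [] \<Longrightarrow> c \<noteq> hd xs \<Longrightarrow>
  remdups_adj (replicate m c @ xs) = c # remdups_adj xs"
proof (induction m)
  case 0 then show ?case by simp
next
  case (Suc m)
  show ?case
  proof (cases m)
    case 0 then show ?thesis using Suc by (cases xs) auto
  next
    case (Suc m') then show ?thesis using Suc.IH Suc.prems by simp
  qed
qed

lemma rd_len: "(\<forall>i<s. k i \<ge> 1) \<Longrightarrow> length (remdups_adj (Kstr s k @ [0])) = Suc s"
proof (induction s)
  case 0 then show ?case by (simp add: Kstr_0)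
next
  case (Suc s)
  have h: "hd (Kstr s k @ [0]) \<in> set (Kstr s k) \<union> {0}" by (cases "Kstr s k") auto
  then have "hd (Kstr s k @ [0]) \<noteq> Suc s" using set_Kstr[of s k] by auto
  then show ?case using Suc rd_rep[of "k s" "Kstr s k @ [0]" "Suc s"] by (simp add: Kstr_Suc)
qed

lemma runs_rd: "runs xs = length (remdups_adj xs)"
proof (induction xs rule: remdups_adj.induct)
  case 1 then show ?case by (simp add: runs_def)
next
  case (2 x) then show ?case by (simp add: runs_def)
next
  case (3 x y xs)
  let ?A = "\<lambda>zs. {i. Suc i < length zs \<and> zs ! i \<noteq> zs ! Suc i}"
  have eq: "?A (x # y # xs) = (if x \<noteq> y then {0} else {}) \<union> Suc ` ?A (y # xs)"
  proof (rule set_eqI)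
    fix i show "i \<in> ?A (x # y # xs) \<longleftrightarrow> i \<in> (if x \<noteq> y then {0} else {}) \<union> Suc ` ?A (y # xs)"
      by (cases i) auto
  qed
  have fin: "finite (?A (y # xs))" by (rule finite_subset[of _ "{..<length (y#xs)}"]) auto
  have c: "card (?A (x # y # xs)) = (if x \<noteq> y then 1 else 0) + card (?A (y # xs))"
    unfolding eq using fin by (auto simp: card_image)
  have r1: "runs (x # y # xs) = Suc (card (?A (x # y # xs)))" by (simp add: runs_def)
  have r2: "runs (y # xs) = Suc (card (?A (y # xs)))" by (simp add: runs_def)
  show ?case
  proof (cases "x = y")
    case True
    then show ?thesis using 3 r1 r2 c by simp
  next
    case False
    then show ?thesis using 3 r1 r2 c by simp
  qed
qed

lemma rot_less:
  fixes s k
  defines "w \<equiv> Kstr s k @ [0]"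
  assumes p: "Suc p < length w"
  shows "rotate (Suc p) w < rotate p w"
proof -
  define d where "d = drop p w"
  define c where "c = w ! p"
  have dne: "d \<noteq> []" using p by (simp add: d_def)
  have hd: "hd d = c" using p by (simp add: d_def c_def hd_drop_conv_nth)
  have lastd: "last d = 0" using p by (simp add: d_def w_def)
  have cpos: "c > 0" using p pos_w[of p s k] by (simp add: c_def w_def)
  define tw where "tw = takeWhile ((=) c) d"
  define dw where "dw = dropWhile ((=) c) d"
  have dsplit: "d = tw @ dw" by (simp add: tw_def dw_def)
  have "dw \<noteq> []"
  proof
    assume "dw = []"
    then have "\<forall>x\<in>set d. c = x" by (simp add: dw_def)
    then have "c = last d" using dne by simp
    then show False using lastd cpos by simp
  qed
  then obtain e rest where dw: "dw = e # rest" by (cases dw) auto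
  have "\<not> (c = hd dw)" using hd_dropWhile[of "(=) c" d] \<open>dw \<noteq> []\<close> by (simp add: dw_def)
  then have ec: "e \<noteq> c" using dw by auto
  have twrep: "tw = replicate (length tw) c"
    unfolding tw_def by (rule replicate_length_same[symmetric]) (auto dest: set_takeWhileD)
  define r where "r = length tw"
  have r1: "r \<ge> 1"
  proof -
    obtain x xs where "d = x # xs" using dne by (cases d) auto
    then show ?thesis using hd by (simp add: r_def tw_def)
  qed
  have "d ! r = e" using dsplit dw by (simp add: r_def nth_append)
  moreover have "p + r < length w"
  proof -
    have "r < length d" using dsplit dw by (simp add: r_def)
    then show ?thesis by (simp add: d_def)
  qed
  ultimately have "e = w ! (p + r)" by (simp add: d_def)
  then have "e \<le> c" using mono_w[of p "p + r" s k] \<open>p + r < length w\<close> by (simp add: c_def w_def)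
  with ec have elc: "e < c" by simp
  have d2: "d = replicate (r - 1) c @ c # (e # rest)"
  proof -
    obtain r' where r': "r = Suc r'" using r1 by (cases r) auto
    have "tw = replicate r c" using twrep by (simp add: r_def)
    also have "\<dots> = replicate r' c @ [c]" by (simp add: r' replicate_append_same)
    finally show ?thesis using dsplit dw r' by simp
  qed
  have tl2: "drop (Suc p) w = replicate (r - 1) c @ e # rest"
  proof -
    have "drop (Suc p) w = tl d" by (simp add: d_def drop_Suc tl_drop)
    also have "\<dots> = replicate (r - 1) c @ e # rest"
      using d2 by (simp add: replicate_app_Cons_same)
    finally show ?thesis .
  qed
  have rp: "rotate p w = replicate (r - 1) c @ c # (e # rest @ take p w)"
  proof -
    have "rotate p w = d @ take p w" using p by (simp add: rotate_drop_take d_def)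
    then show ?thesis using d2 by simp
  qed
  have rsp: "rotate (Suc p) w = replicate (r - 1) c @ e # (rest @ take p w @ [c])"
  proof -
    have "rotate (Suc p) w = drop (Suc p) w @ take (Suc p) w" using p by (simp add: rotate_drop_take)
    moreover have "take (Suc p) w = take p w @ [c]" using p by (simp add: take_Suc_conv_app_nth c_def)
    ultimately show ?thesis using tl2 by simp
  qed
  show ?thesis unfolding rp rsp list_less_def
    by (rule lexord_append_left_rightI) (use elc in simp)
qed

lemma rot_le:
  "p \<le> q \<Longrightarrow> q < length (Kstr s k @ [0]) \<Longrightarrow>
   rotate q (Kstr s k @ [0]) \<le> rotate p (Kstr s k @ [0])"
proof (induction q)
  case 0 then show ?case by simp
next
  case (Suc q)
  show ?case
  proof (cases "p = Suc q")
    case True then show ?thesis by simp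
  next
    case False
    then have "p \<le> q" using Suc.prems by simp
    moreover have "q < length (Kstr s k @ [0])" using Suc.prems by simp
    ultimately have a: "rotate q (Kstr s k @ [0]) \<le> rotate p (Kstr s k @ [0])" by (rule Suc.IH)
    have "Suc q < length (Kstr s k @ [0])" using Suc.prems by simp
    then have b: "rotate (Suc q) (Kstr s k @ [0]) < rotate q (Kstr s k @ [0])" by (rule rot_less)
    show ?thesis by (rule order_trans[OF less_imp_le[OF b] a])
  qed
qed

lemma sorted_rots:
  fixes s k
  defines "w \<equiv> Kstr s k @ [0]"
  assumes "m \<le> length w"
  shows "sorted (map (\<lambda>i. rotate i w) (rev [0..<m]))"
  using assms(2)
proof (induction m)
  case 0 then show ?case by simp
next
  case (Suc m)
  have a: "\<forall>i\<in>set (map (\<lambda>i. rotate i w) (rev [0..<m])). rotate m w \<le> i"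
    using rot_le[of _ m s k] Suc.prems by (auto simp: w_def)
  have b: "sorted (map (\<lambda>i. rotate i w) (rev [0..<m]))" using Suc by simp
  have "map (\<lambda>i. rotate i w) (rev [0..<Suc m]) = rotate m w # map (\<lambda>i. rotate i w) (rev [0..<m])"
    by simp
  then show ?case using a b by (simp only: sorted_simps)
qed

lemma last_rot:
  assumes "i < length w" "w \<noteq> []"
  shows "last (rotate i w) = (if i = 0 then last w else w ! (i - 1))"
proof (cases i)
  case 0 then show ?thesis by simp
next
  case (Suc j)
  have "rotate i w = drop i w @ take i w" using assms by (simp add: rotate_drop_take)
  moreover have "take i w = take j w @ [w ! j]" using assms Suc by (simp add: take_Suc_conv_app_nth)
  ultimately show ?thesis using Suc by simp
qed

lemma bwt_K: "bwt (Kstr s k @ [0]) = rev (Kstr s k) @ [0]"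
proof -
  define w where "w = Kstr s k @ [0]"
  define L where "L = length (Kstr s k)"
  have n: "length w = Suc L" by (simp add: w_def L_def)
  have srt: "sort (map (\<lambda>i. rotate i w) [0..<length w]) = map (\<lambda>i. rotate i w) (rev [0..<length w])"
  proof (rule properties_for_sort)
    show "sorted (map (\<lambda>i. rotate i w) (rev [0..<length w]))"
      using sorted_rots[of "length w" s k] by (simp add: w_def)
    show "mset (map (\<lambda>i. rotate i w) (rev [0..<length w])) = mset (map (\<lambda>i. rotate i w) [0..<length w])"
      by (simp add: rev_map[symmetric])
  qed
  define g where "g = (\<lambda>i. if i = 0 then last w else w ! (i - 1))"
  have "bwt w = map (\<lambda>i. last (rotate i w)) (rev [0..<length w])"
    unfolding bwt_def srt by (simp only: map_map o_def)
  also have "\<dots> = map g (rev [0..<length w])"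
  proof (rule map_cong)
    fix i assume "i \<in> set (rev [0..<length w])"
    then have "i < length w" by simp
    moreover have "w \<noteq> []" by (simp add: w_def)
    ultimately show "last (rotate i w) = g i" unfolding g_def by (rule last_rot)
  qed simp
  also have "\<dots> = rev (map g [Suc 0..<Suc L]) @ [0]"
  proof -
    have u: "[0..<length w] = 0 # [Suc 0..<Suc L]" unfolding n by (rule upt_conv_Cons) simp
    have g0: "g 0 = 0" by (simp add: g_def w_def)
    show ?thesis unfolding u by (simp add: rev_map g0)
  qed
  also have "map g [Suc 0..<Suc L] = map (\<lambda>i. Kstr s k ! i) [0..<L]"
  proof -
    have "map g [Suc 0..<Suc L] = map (g \<circ> Suc) [0..<L]"
      by (simp only: map_Suc_upt[symmetric] map_map)
    also have "\<dots> = map (\<lambda>i. Kstr s k ! i) [0..<L]"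
    proof (rule map_cong)
      fix i assume "i \<in> set [0..<L]"
      then have "i < L" by simp
      then show "(g \<circ> Suc) i = Kstr s k ! i" by (simp add: g_def w_def nth_append L_def)
    qed simp
    finally show ?thesis .
  qed
  also have "\<dots> = Kstr s k" by (simp add: L_def map_nth)
  finally show ?thesis unfolding w_def .
qed

lemma len_rd_cons: "xs \<noteq> [] \<Longrightarrow> x \<notin> set xs \<Longrightarrow>
   length (remdups_adj (x # xs)) = Suc (length (remdups_adj xs))"
proof -
  assume a: "xs \<noteq> []" "x \<notin> set xs"
  obtain y ys where e: "remdups_adj xs = y # ys" using a by (cases "remdups_adj xs") auto
  have "y = hd xs" using e hd_remdups_adj[of xs] by simp
  then have "x \<noteq> y" using a by auto
  then show ?thesis by (simp add: remdups_adj_Cons e)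
qed

lemma runs_K:
  assumes "\<forall>i<s. k i \<ge> 1" "s \<ge> 1"
  shows "runs (Kstr s k @ [0]) = Suc s" "runs (rev (Kstr s k) @ [0]) = Suc s"
proof -
  define K where "K = Kstr s k"
  obtain s' where s': "s = Suc s'" using assms(2) by (cases s) auto
  have "k s' \<ge> 1" using assms s' by simp
  then have ne: "K \<noteq> []" by (simp add: K_def s' Kstr_Suc)
  have z: "0 \<notin> set K" using set_Kstr[of s k] by (auto simp: K_def)
  show 1: "runs (Kstr s k @ [0]) = Suc s" using rd_len[OF assms(1)] by (simp add: runs_rd)
  have e1: "K @ [0] = rev (0 # rev K)" by simp
  have e2: "rev K @ [0] = rev (0 # K)" by simp
  have "length (remdups_adj (K @ [0])) = length (remdups_adj (0 # rev K))"
    unfolding e1 by (simp only: remdups_adj_rev length_rev)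
  also have "\<dots> = Suc (length (remdups_adj (rev K)))"
    by (rule len_rd_cons) (use ne z in simp_all)
  also have "\<dots> = Suc (length (remdups_adj K))"
    by (simp only: remdups_adj_rev length_rev)
  also have "\<dots> = length (remdups_adj (0 # K))"
    by (rule len_rd_cons[symmetric]) (use ne z in simp_all)
  also have "\<dots> = length (remdups_adj (rev K @ [0]))"
    unfolding e2 by (simp only: remdups_adj_rev length_rev)
  finally show "runs (rev (Kstr s k) @ [0]) = Suc s" using 1 by (simp add: runs_rd K_def)
qed

lemma r_bwt_K: "\<forall>i<s. k i \<ge> 1 \<Longrightarrow> s \<ge> 1 \<Longrightarrow> r_bwt (Kstr s k) = Suc s"
  by (simp add: r_bwt_def bwt_K runs_K)


lemma Kstr_split: "i < s \<Longrightarrow> \<exists>A. Kstr s k = A @ Kstr (Suc i) k"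
proof (induction s)
  case 0 then show ?case by simp
next
  case (Suc s)
  show ?case
  proof (cases "i = s")
    case True then show ?thesis by auto
  next
    case False
    then have "i < s" using Suc.prems by simp
    then obtain A where "Kstr s k = A @ Kstr (Suc i) k" using Suc.IH by blast
    then show ?thesis by (simp add: Kstr_Suc[of s])
  qed
qed

lemma Kstr_head: "(\<forall>j<i. k j \<ge> 1) \<Longrightarrow> \<exists>B. Kstr i k @ [0] = i # B"
proof (cases i)
  case 0 then show ?thesis by (simp add: Kstr_0)
next
  case (Suc i')
  assume a: "\<forall>j<i. k j \<ge> 1"
  then have "k i' \<ge> 1" using Suc by simp
  then obtain m where "k i' = Suc m" by (cases "k i'") auto
  then show ?thesis using Suc by (simp add: Kstr_Suc)
qed

lemma occ_block:
  assumes "\<forall>j<s. k j \<ge> 1" "i < s"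
  shows "\<exists>A B. Kstr s k @ [0] = A @ replicate (k i) (Suc i) @ i # B"
proof -
  obtain A where A: "Kstr s k = A @ Kstr (Suc i) k" using Kstr_split[OF assms(2)] by blast
  obtain B where B: "Kstr i k @ [0] = i # B" using Kstr_head[of i k] assms by auto
  have "Kstr s k @ [0] = A @ replicate (k i) (Suc i) @ (Kstr i k @ [0])"
    using A by (simp add: Kstr_Suc)
  then show ?thesis using B by auto
qed

lemma rext_blocks:
  assumes "\<forall>j<s. k j \<ge> 1" "i < s"
  shows "right_extension (Kstr s k @ [0]) (replicate (k i) (Suc i))"
    "right_extension (Kstr s k @ [0]) (replicate (k i - 1) (Suc i) @ [i])"
proof -
  obtain A B where AB: "Kstr s k @ [0] = A @ replicate (k i) (Suc i) @ i # B"
    using occ_block[OF assms] by blast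
  have "k i \<ge> 1" using assms by simp
  then obtain m where m: "k i = Suc m" by (cases "k i") auto
  have r: "replicate (k i) (Suc i) = replicate m (Suc i) @ [Suc i]"
    by (simp add: m replicate_append_same)
  have r2: "replicate (k i) (Suc i) = Suc i # replicate m (Suc i)"
    by (simp add: m)
  have s1: "sublist (replicate m (Suc i) @ [Suc i]) (Kstr s k @ [0])"
    unfolding sublist_def using AB r by (metis append.assoc append_Cons)
  have s2: "sublist (replicate m (Suc i) @ [i]) (Kstr s k @ [0])"
    unfolding sublist_def using AB r2 
    by (intro exI[of _ "A @ [Suc i]"] exI[of _ B]) simp
  show "right_extension (Kstr s k @ [0]) (replicate (k i) (Suc i))"
    unfolding right_extension_def
    by (intro exI[of _ "replicate m (Suc i)"] exI[of _ "Suc i"] exI[of _ i]) (use s1 s2 r in auto)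
  show "right_extension (Kstr s k @ [0]) (replicate (k i - 1) (Suc i) @ [i])"
    unfolding right_extension_def
    by (intro exI[of _ "replicate m (Suc i)"] exI[of _ "i"] exI[of _ "Suc i"]) (use s1 s2 m in auto)
qed

lemma suffix_last2: "suffix y z \<Longrightarrow> length y \<ge> 2 \<Longrightarrow> take 2 (rev y) = take 2 (rev z)"
  unfolding suffix_def by auto

lemma chi_lower:
  assumes k: "\<forall>j<s. k j > 1" and S: "suffixient S (Kstr s k @ [0])"
  shows "2 * s \<le> card S"
proof -
  define w where "w = Kstr s k @ [0]"
  have k1: "\<forall>j<s. k j \<ge> 1" using k by auto
  define Y where "Y = (\<lambda>(i, b). if b then replicate (k i) (Suc i) else replicate (k i - 1) (Suc i) @ [i])"
  define I where "I = {..<s} \<times> (UNIV :: bool set)"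
  have rext: "right_extension w (Y ib)" if "ib \<in> I" for ib
    using that rext_blocks[OF k1] by (auto simp: Y_def I_def w_def)
  have fS: "finite S" using S by (auto simp: suffixient_def intro: finite_subset)
  have ex: "\<exists>j\<in>S. suffix (Y ib) (take (Suc j) w)" if "ib \<in> I" for ib
    using S rext[OF that] by (auto simp: suffixient_def w_def)
  define J where "J = (\<lambda>ib. SOME j. j \<in> S \<and> suffix (Y ib) (take (Suc j) w))"
  have J: "J ib \<in> S \<and> suffix (Y ib) (take (Suc (J ib)) w)" if "ib \<in> I" for ib
    unfolding J_def using someI_ex[OF ex[OF that, unfolded Bex_def]] .
  have l2: "take 2 (rev (Y (i, b))) = (if b then [Suc i, Suc i] else [i, Suc i])"
    and len: "length (Y (i, b)) \<ge> 2" if "i < s" for i b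
  proof -
    define m where "m = k i - 2"
    have "k i > 1" using k that by simp
    then have m: "k i = Suc (Suc m)" by (simp add: m_def)
    have r1: "rev (replicate (k i) (Suc i)) = Suc i # Suc i # replicate m (Suc i)"
    proof -
      have "rev (replicate (k i) (Suc i)) = replicate (k i) (Suc i)" by (rule rev_replicate)
      also have "\<dots> = Suc i # Suc i # replicate m (Suc i)" by (simp add: m)
      finally show ?thesis .
    qed
    have r2: "rev (replicate (k i - 1) (Suc i) @ [i]) = i # Suc i # replicate m (Suc i)"
    proof -
      have "rev (replicate (k i - 1) (Suc i)) = replicate (k i - 1) (Suc i)" by (rule rev_replicate)
      also have "\<dots> = Suc i # replicate m (Suc i)" by (simp add: m)
      finally have a1: "rev (replicate (k i - 1) (Suc i)) = Suc i # replicate m (Suc i)" .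
      show ?thesis by (simp add: m replicate_append_same)
    qed
    show "take 2 (rev (Y (i, b))) = (if b then [Suc i, Suc i] else [i, Suc i])"
      by (cases b) (simp_all only: Y_def r1 r2 prod.case if_True if_False, simp_all add: numeral_2_eq_2)
    show "length (Y (i, b)) \<ge> 2" by (simp add: Y_def m)
  qed
  have inj: "inj_on J I"
  proof (rule inj_onI)
    fix x y assume x: "x \<in> I" and y: "y \<in> I" and e: "J x = J y"
    obtain i b where xi: "x = (i, b)" "i < s" using x by (auto simp: I_def)
    obtain i' b' where yi: "y = (i', b')" "i' < s" using y by (auto simp: I_def)
    have "take 2 (rev (Y x)) = take 2 (rev (take (Suc (J x)) w))"
      using J[OF x] suffix_last2 len[OF xi(2)] xi(1) by blast
    moreover have "take 2 (rev (Y y)) = take 2 (rev (take (Suc (J y)) w))"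
      using J[OF y] suffix_last2 len[OF yi(2)] yi(1) by blast
    ultimately have "take 2 (rev (Y x)) = take 2 (rev (Y y))" using e by simp
    then have "(if b then [Suc i, Suc i] else [i, Suc i]) = (if b' then [Suc i', Suc i'] else [i', Suc i'])"
      using l2[OF xi(2)] l2[OF yi(2)] xi yi by simp
    then show "x = y" using xi yi by (auto split: if_splits)
  qed
  have "card I \<le> card S"
    by (rule card_inj_on_le[OF inj]) (use J fS in auto)
  moreover have "card I = 2 * s" by (simp add: I_def card_cartesian_product)
  ultimately show ?thesis by simp
qed


lemma run_end: "j0 < length w \<Longrightarrow>
  \<exists>j\<ge>j0. j < length w \<and> w ! j = w ! j0 \<and> (Suc j = length w \<or> w ! j \<noteq> w ! Suc j)"
proof (induction "length w - j0" arbitrary: j0)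
  case 0 then show ?case by simp
next
  case (Suc d)
  show ?case
  proof (cases "Suc j0 = length w \<or> w ! j0 \<noteq> w ! Suc j0")
    case True then show ?thesis using Suc.prems by blast
  next
    case False
    then have a: "Suc j0 < length w" "w ! j0 = w ! Suc j0" using Suc.prems by auto
    have "d = length w - Suc j0" using Suc.hyps by simp
    from Suc.hyps(1)[OF this a(1)] obtain j where
      "j \<ge> Suc j0" "j < length w" "w ! j = w ! Suc j0" "Suc j = length w \<or> w ! j \<noteq> w ! Suc j"
      by blast
    then show ?thesis using a(2) by (intro exI[of _ j]) auto
  qed
qed

lemma const_chain: "(\<forall>t<m. f t = f (Suc t)) \<Longrightarrow> t \<le> m \<Longrightarrow> f t = f m"
proof (induction m arbitrary: t)
  case 0 then show ?case by simp
next
  case (Suc m)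
  show ?case
  proof (cases "t = Suc m")
    case True then show ?thesis by simp
  next
    case False
    then have "t \<le> m" using Suc.prems by simp
    moreover have "\<forall>t<m. f t = f (Suc t)" using Suc.prems(1) by simp
    ultimately have "f t = f m" using Suc.IH by blast
    moreover have "f m = f (Suc m)" using Suc.prems(1) by blast
    ultimately show ?thesis by simp
  qed
qed

lemma suffix_const:
  assumes "m \<le> j" "j < length w" "\<forall>t. j - m \<le> t \<and> t \<le> j \<longrightarrow> w ! t = a"
  shows "suffix (replicate (Suc m) a) (take (Suc j) w)"
proof -
  have d: "drop (j - m) (take (Suc j) w) = replicate (Suc m) a"
  proof (rule nth_equalityI)
    show "length (drop (j - m) (take (Suc j) w)) = length (replicate (Suc m) a)"
      using assms by simp
    fix t assume "t < length (drop (j - m) (take (Suc j) w))"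
    then have t: "t < Suc m" using assms by simp
    have "drop (j - m) (take (Suc j) w) ! t = w ! (j - m + t)"
      using assms t by simp
    also have "\<dots> = a"
    proof -
      have h: "j - m \<le> j - m + t \<and> j - m + t \<le> j" using assms(1) t by auto
      show ?thesis using assms(3) h by blast
    qed
    finally show "drop (j - m) (take (Suc j) w) ! t = replicate (Suc m) a ! t" using t by (simp del: replicate_Suc)
  qed
  have "take (Suc j) w = take (j - m) (take (Suc j) w) @ drop (j - m) (take (Suc j) w)"
    by (rule append_take_drop_id[symmetric])
  then show ?thesis unfolding suffix_def d by blast
qed

lemma chi_upper_set:
  assumes k1: "\<forall>j<s. k j \<ge> 1" and s1: "s \<ge> 1"
  shows "suffixient ({i. Suc i < length (Kstr s k @ [0]) \<and> (Kstr s k @ [0]) ! i \<noteq> (Kstr s k @ [0]) ! Suc i}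
      \<union> Suc ` {i. Suc i < length (Kstr s k @ [0]) \<and> (Kstr s k @ [0]) ! i \<noteq> (Kstr s k @ [0]) ! Suc i})
      (Kstr s k @ [0])"
proof -
  define w where "w = Kstr s k @ [0]"
  define L where "L = length (Kstr s k)"
  define A where "A = {i. Suc i < length w \<and> w ! i \<noteq> w ! Suc i}"
  have n: "length w = Suc L" by (simp add: w_def L_def)
  have mono: "\<And>i j. i \<le> j \<Longrightarrow> j < length w \<Longrightarrow> w ! j \<le> w ! i"
    unfolding w_def by (rule mono_w)
  obtain s' where s': "s = Suc s'" using s1 by (cases s) auto
  have "k s' \<ge> 1" using k1 s' by simp
  then have L1: "L \<ge> 1" by (simp add: L_def s' Kstr_Suc)
  have wL: "w ! L = 0" by (simp add: w_def L_def)
  have wpos: "w ! (L - 1) > 0" unfolding w_def using pos_w[of "L - 1" s k] L1 by (simp add: L_def)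
  have LA: "L \<in> Suc ` A"
  proof -
    have "L - 1 \<in> A" using wL wpos L1 n by (simp add: A_def)
    then show ?thesis using L1 by (metis Suc_diff_1 image_eqI less_le_trans zero_less_one)
  qed
  have "suffixient (A \<union> Suc ` A) w"
    unfolding suffixient_def
  proof (intro conjI allI impI)
    show "A \<union> Suc ` A \<subseteq> {..<length w}" by (auto simp: A_def)
    fix y assume "right_extension w y"
    then obtain x a b where y: "y = x @ [a]" and ab: "a \<noteq> b"
      and sa: "sublist (x @ [a]) w" and sb: "sublist (x @ [b]) w"
      unfolding right_extension_def by blast
    obtain ps ss where wa: "w = ps @ (x @ [a]) @ ss" using sa unfolding sublist_def by blast
    obtain ps' ss' where wb: "w = ps' @ (x @ [b]) @ ss'" using sb unfolding sublist_def by blast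
    define p where "p = length ps"
    define p' where "p' = length ps'"
    define m where "m = length x"
    have hx: "\<And>t. t < m \<Longrightarrow> w ! (p + t) = x ! t"
      unfolding wa p_def m_def by (simp add: nth_append)
    have ha: "w ! (p + m) = a" unfolding wa p_def m_def by (simp add: nth_append)
    have pn: "p + m < length w" using wa by (simp add: p_def m_def)
    have hx': "\<And>t. t < m \<Longrightarrow> w ! (p' + t) = x ! t"
      unfolding wb p'_def m_def by (simp add: nth_append)
    have hb: "w ! (p' + m) = b" unfolding wb p'_def m_def by (simp add: nth_append)
    have pn': "p' + m < length w" using wb by (simp add: p'_def m_def)
    have suf0: "suffix y (take (Suc (p + m)) w)"
    proof -
      have "take (Suc (p + m)) w = ps @ x @ [a]"
        unfolding wa p_def m_def by simp
      then show ?thesis unfolding suffix_def y by blast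
    qed
    show "\<exists>j\<in>A \<union> Suc ` A. suffix y (take (Suc j) w)"
    proof (cases "m > 0 \<and> w ! (p + m - 1) \<noteq> w ! (p + m)")
      case True
      then have "p + m - 1 \<in> A" using pn by (simp add: A_def)
      then have "Suc (p + m - 1) \<in> Suc ` A" by blast
      moreover have "Suc (p + m - 1) = p + m" using True by simp
      ultimately show ?thesis using suf0 by (intro bexI[of _ "p + m"]) auto
    next
      case False
      have Q: "\<forall>t\<le>m. w ! (p + t) = a"
      proof (cases "m = 0")
        case True then show ?thesis using ha by simp
      next
        case m0: False
        then have lastx: "w ! (p + m - 1) = a" using False ha by simp
        have "p \<noteq> p'"
        proof
          assume "p = p'" then show False using ha hb ab by simp
        qed
        then consider "p < p'" | "p' < p" by linarith
        then show ?thesis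
        proof cases
          case 1
          have ch: "\<forall>t<m. w ! (p + t) = w ! (p + Suc t)"
          proof (intro allI impI)
            fix t assume t: "t < m"
            have u: "w ! (p + Suc t) \<le> w ! (p + t)" using mono[of "p + t" "p + Suc t"] t pn by simp
            have "w ! (p + t) = w ! (p' + t)" using hx hx' t by simp
            also have "\<dots> \<le> w ! (p + Suc t)" using mono[of "p + Suc t" "p' + t"] t pn' 1 by simp
            finally show "w ! (p + t) = w ! (p + Suc t)" using u by simp
          qed
          show ?thesis
          proof (intro allI impI)
            fix t assume "t \<le> m"
            then have "w ! (p + t) = w ! (p + m)"
              using const_chain[of m "\<lambda>t. w ! (p + t)" t] ch by simp
            then show "w ! (p + t) = a" using ha by simp
          qed
        next
          case 2
          have ch: "\<forall>t<m. w ! (p' + t) = w ! (p' + Suc t)"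
          proof (intro allI impI)
            fix t assume t: "t < m"
            have u: "w ! (p' + Suc t) \<le> w ! (p' + t)" using mono[of "p' + t" "p' + Suc t"] t pn' by simp
            have "w ! (p' + t) = w ! (p + t)" using hx hx' t by simp
            also have "\<dots> \<le> w ! (p' + Suc t)" using mono[of "p' + Suc t" "p + t"] t pn 2 by simp
            finally show "w ! (p' + t) = w ! (p' + Suc t)" using u by simp
          qed
          have "m - 1 < m" using m0 by simp
          from ch[rule_format, OF this] have "w ! (p' + (m - 1)) = w ! (p' + Suc (m - 1))" .
          then have "w ! (p' + (m - 1)) = b" using hb m0 by simp
          moreover have "w ! (p' + (m - 1)) = w ! (p + (m - 1))"
            using \<open>m - 1 < m\<close> by (simp only: hx hx')
          moreover have "p + (m - 1) = p + m - 1" using m0 by simp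
          ultimately have "b = a" using lastx by simp
          then show ?thesis using ab by simp
        qed
      qed
      obtain j where j: "j \<ge> p + m" "j < length w" "w ! j = w ! (p + m)"
        "Suc j = length w \<or> w ! j \<noteq> w ! Suc j"
        using run_end[OF pn] by blast
      have yrep: "y = replicate (Suc m) a"
      proof (rule nth_equalityI)
        show "length y = length (replicate (Suc m) a)" by (simp add: y m_def)
        fix t assume "t < length y"
        then have t: "t \<le> m" by (simp add: y m_def)
        show "y ! t = replicate (Suc m) a ! t"
        proof (cases "t = m")
          case True then show ?thesis by (simp add: y m_def nth_append del: replicate_Suc)
        next
          case False
          then have "t < m" using t by simp
          then have "x ! t = a" using hx Q by (metis less_imp_le)
          then show ?thesis using \<open>t < m\<close> by (simp add: y m_def nth_append del: replicate_Suc)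
        qed
      qed
      have "suffix (replicate (Suc m) a) (take (Suc j) w)"
      proof (rule suffix_const)
        show "m \<le> j" using j by simp
        show "j < length w" using j by simp
        show "\<forall>t. j - m \<le> t \<and> t \<le> j \<longrightarrow> w ! t = a"
        proof (intro allI impI)
          fix t assume t: "j - m \<le> t \<and> t \<le> j"
          have pt: "p \<le> t" using t j(1) by linarith
          have "w ! t \<le> w ! p" using mono[of p t] pt t j by simp
          moreover have "w ! j \<le> w ! t" using mono[of t j] t j by simp
          moreover have "w ! p = a" using Q by (metis add_0_right le0)
          moreover have "w ! j = a" using j ha by simp
          ultimately show "w ! t = a" by simp
        qed
      qed
      moreover have "j \<in> A \<union> Suc ` A"
      proof (cases "Suc j = length w")
        case True
        then have "j = L" using n by simp
        then show ?thesis using LA by simp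
      next
        case False
        then have "Suc j < length w" using j by simp
        then show ?thesis using j False by (simp add: A_def)
      qed
      ultimately show ?thesis using yrep by blast
    qed
  qed
  then show ?thesis by (simp add: w_def A_def)
qed

lemma chi_K:
  assumes k: "\<forall>j<s. k j > 1" and s1: "s \<ge> 1"
  shows "chi (Kstr s k) = 2 * s"
proof -
  define w where "w = Kstr s k @ [0]"
  define A where "A = {i. Suc i < length w \<and> w ! i \<noteq> w ! Suc i}"
  have k1: "\<forall>j<s. k j \<ge> 1" using k by auto
  have T: "suffixient (A \<union> Suc ` A) w"
    using chi_upper_set[OF k1 s1] by (simp add: w_def A_def)
  have "runs w = Suc (card A)" by (simp add: runs_def w_def A_def)
  then have cA: "card A = s" using runs_K(1)[OF k1 s1] by (simp add: w_def)
  have "card (A \<union> Suc ` A) \<le> card A + card (Suc ` A)" by (rule card_Un_le)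
  also have "\<dots> \<le> card A + card A"
  proof -
    have "finite A" by (rule finite_subset[of _ "{..<length w}"]) (auto simp: A_def)
    then show ?thesis using card_image_le[of A Suc] by simp
  qed
  finally have c1: "card (A \<union> Suc ` A) \<le> 2 * s" using cA by simp
  have c2: "2 * s \<le> card (A \<union> Suc ` A)" using chi_lower[OF k] T by (simp add: w_def)
  have fin: "finite {S. suffixient S w}"
    by (rule finite_subset[of _ "Pow {..<length w}"]) (auto simp: suffixient_def)
  show ?thesis unfolding chi_def
  proof (rule Min_eqI)
    show "finite (card ` {S. suffixient S (Kstr s k @ [0])})" using fin by (simp add: w_def)
    show "\<And>y. y \<in> card ` {S. suffixient S (Kstr s k @ [0])} \<Longrightarrow> 2 * s \<le> y"
      using chi_lower[OF k] by auto
    show "2 * s \<in> card ` {S. suffixient S (Kstr s k @ [0])}"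
      using T c1 c2 by (intro image_eqI[of _ _ "A \<union> Suc ` A"]) (auto simp: w_def)
  qed
qed

theorem theorem1:
  fixes k :: "nat \<Rightarrow> nat \<Rightarrow> nat"
  assumes "\<And>\<sigma> i. 1 \<le> \<sigma> \<Longrightarrow> i < \<sigma> \<Longrightarrow> k \<sigma> i > 1"
  shows "(\<lambda>\<sigma>. real (chi (Kstr \<sigma> (k \<sigma>))) / real (r_bwt (Kstr \<sigma> (k \<sigma>))))
           \<longlonglongrightarrow> 2"
proof -
  have ev: "eventually (\<lambda>\<sigma>. real (chi (Kstr \<sigma> (k \<sigma>))) / real (r_bwt (Kstr \<sigma> (k \<sigma>)))
      = 2 - 2 * inverse (real (Suc \<sigma>))) sequentially"
    unfolding eventually_sequentially
  proof (intro exI[of _ 1] allI impI)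
    fix \<sigma> :: nat assume s1: "1 \<le> \<sigma>"
    have k: "\<forall>j<\<sigma>. k \<sigma> j > 1" using assms s1 by blast
    have k1: "\<forall>j<\<sigma>. k \<sigma> j \<ge> 1" using k by auto
    have "chi (Kstr \<sigma> (k \<sigma>)) = 2 * \<sigma>" by (rule chi_K[OF k s1])
    moreover have "r_bwt (Kstr \<sigma> (k \<sigma>)) = Suc \<sigma>" by (rule r_bwt_K[OF k1 s1])
    ultimately show "real (chi (Kstr \<sigma> (k \<sigma>))) / real (r_bwt (Kstr \<sigma> (k \<sigma>)))
      = 2 - 2 * inverse (real (Suc \<sigma>))"
      by (simp add: field_simps)
  qed
  have "(\<lambda>\<sigma>. 2 - 2 * inverse (real (Suc \<sigma>))) \<longlonglongrightarrow> 2 - 2 * 0"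
    by (intro tendsto_intros LIMSEQ_inverse_real_of_nat)
  then have "(\<lambda>\<sigma>. 2 - 2 * inverse (real (Suc \<sigma>))) \<longlonglongrightarrow> (2::real)" by simp
  then show ?thesis using tendsto_cong[OF ev] by simp
qed

end
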